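(* Let $N,M\ge1$, $\mathbf{y}\in\mathbb{C}^M$, $\mathbf{x}\in\mathbb{R}^N$, $\mu_1,\dots,\mu_N\in\mathbb{R}$, $\sigma_1,\dots,\sigma_N>0$, $\delta^2>0$, $\sigma_h^2>0$, $\sigma_w^2>0$, and let $c=\exp\left(\frac{2\pi j}{N+1}\right)$ with $j=\sqrt{-1}$. Consider latent variables $T\in\{0,1,\dots,N\}$ and $\boldsymbol\theta=[\theta_1,\dots,\theta_N]^T\in(0,1)^N$ with joint density (with observation $\mathbf{y}$) $$p(\mathbf{y},T=m,\boldsymbol\theta\mid\boldsymbol\Phi)=\frac{1}{[2\pi(\sigma_h^2m+\sigma_w^2)]^M}\exp\left(-\frac{\|\mathbf{y}\|_2^2}{2(\sigma_h^2m+\sigma_w^2)}\right)\cdot P(m\mid\boldsymbol\theta)\cdot p(\boldsymbol\theta\mid\mathbf{x}),$$ where $P(m\mid\boldsymbol\theta)=\frac{1}{N+1}\sum_{\ell=0}^N c^{-\ell m}\prod_{k=1}^N[1+(c^\ell-1)\theta_k]$ (the Poisson-binomial probability of $m$ successes in independent Bernoulli trials with success probabilities $\theta_1,\dots,\theta_N$) and $$p(\boldsymbol\theta\mid\mathbf{x})=\left(\prod_{n=1}^N\frac{\sigma_n}{\theta_n-\theta_n^2}\right)\frac{1}{(2\pi)^{N/2}\delta^N}\exp\left(-\frac{\sum_{n=1}^N\left(-\sigma_n\log\left(\frac{1}{\theta_n}-1\right)+\mu_n-x_n\right)^2}{2\delta^2}\right).$$ Let $q(T)$ be a probability mass function on $\{0,\dots,N\}$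 and $q(\theta_1),\dots,q(\theta_N)$ probability densities on $(0,1)$, and let $\mathbb{E}$ denote expectation with respect to the product distribution $q(T)\prod_n q(\theta_n)$. Then the mean-field (variational E-step) updates $$q^*(T)\propto\exp\left\{\mathbb{E}_{\boldsymbol\theta}\left[\log p(\mathbf{y},T,\boldsymbol\theta\mid\boldsymbol\Phi)\right]\right\},\qquad q^*(\theta_n)\propto\exp\left\{\mathbb{E}_{T,\boldsymbol\theta\setminus\theta_n}\left[\log p(\mathbf{y},T,\boldsymbol\theta\mid\boldsymbol\Phi)\right]\right\}$$ are given by $$q^*(T=m)=\frac{g_a(m)}{\sum_{k=0}^N g_a(k)},\qquad q^*(\theta_n=z_n)=\frac{g_b(z_n)}{\int_0^1 g_b(z_n)\,dz_n},$$ where $$g_a(m)=\frac{\mathcal{F}_1(m)}{(\sigma_w^2+m\sigma_h^2)^M}\exp\left\{-\frac{\|\mathbf{y}\|_2^2}{2(\sigma_w^2+m\sigma_h^2)}\right\},$$ $$g_b(z_n)=\frac{\mathcal{F}_2(z_n)}{z_n(1-z_n)}\exp\left\{-\frac{1}{2\delta^2}\left(-\sigma_n\log\left(\frac{1}{z_n}-1\right)+\mu_n-x_n\right)^2\right\},$$ $$\mathcal{F}_1(m)=\exp\left\{\mathbb{E}_{\boldsymbol\theta}\left(\log\Big(\sum_{\ell=0}^N c^{-\ell m}\prod_{k=1}^N[1+(c^\ell-1)\theta_k]\Big)\right)\right\},$$ $$\mathcal{F}_2(z_n)=\left.\exp\left\{\mathbb{E}_{T,\boldsymbol\theta\setminus\theta_n}\left(\log\Big(\sum_{\ell=0}^N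 c^{-\ell T}\prod_{k=1}^N[1+(c^\ell-1)\theta_k]\Big)\right)\right\}\right|_{\theta_n=z_n}.$$
   Context: $\boldsymbol\Phi=\{\mathbf{x},\delta^2,\sigma_h^2,\sigma_w^2\}$ is the parameter set. $\mathbb{E}_{\boldsymbol\theta}$ is expectation over $\boldsymbol\theta\sim\prod_k q(\theta_k)$; $\mathbb{E}_{T,\boldsymbol\theta\setminus\theta_n}$ is expectation over $T\sim q(T)$ and $\theta_k\sim q(\theta_k)$, $k\ne n$, independently, with $\theta_n$ held fixed. The sum $\sum_{\ell}c^{-\ell m}\prod_k[1+(c^\ell-1)\theta_k]$ equals $(N+1)P(m\mid\boldsymbol\theta)$, a positive real number. Expectations are assumed finite. *)

theory Defs
  imports "HOL-Probability.Probability"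
begin

definition c_root :: "nat \<Rightarrow> complex" where
  "c_root N = cis (2 * pi / real (N + 1))"

definition PBsum :: "nat \<Rightarrow> nat \<Rightarrow> (nat \<Rightarrow> real) \<Rightarrow> complex" where
  "PBsum N m \<theta> = (\<Sum>l = 0..N. inverse (c_root N) ^ (l * m) *
        (\<Prod>k = 1..N. 1 + (c_root N ^ l - 1) * complex_of_real (\<theta> k)))"

definition PB :: "nat \<Rightarrow> nat \<Rightarrow> (nat \<Rightarrow> real) \<Rightarrow> real" where
  "PB N m \<theta> = Re (PBsum N m \<theta>) / real (N + 1)"

definition prior :: "nat \<Rightarrow> (nat \<Rightarrow> real) \<Rightarrow> (nat \<Rightarrow> real) \<Rightarrow> real \<Rightarrow> (nat \<Rightarrow> real)
    \<Rightarrow> (nat \<Rightarrow> real) \<Rightarrow> real" where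
  "prior N \<mu> \<sigma> dsq x \<theta> =
     (\<Prod>n = 1..N. \<sigma> n / (\<theta> n - (\<theta> n)\<^sup>2)) *
     (1 / ((2 * pi) powr (real N / 2) * sqrt dsq ^ N)) *
     exp (- (\<Sum>n = 1..N. (- \<sigma> n * ln (1 / \<theta> n - 1) + \<mu> n - x n)\<^sup>2) / (2 * dsq))"

text \<open>Joint density p(y, T = m, theta | Phi); M = CARD('m), hsq = sigma_h^2, wsq = sigma_w^2.\<close>
definition joint :: "nat \<Rightarrow> (nat \<Rightarrow> real) \<Rightarrow> (nat \<Rightarrow> real) \<Rightarrow> real \<Rightarrow> real \<Rightarrow> real
    \<Rightarrow> (nat \<Rightarrow> real) \<Rightarrow> complex ^ 'm \<Rightarrow> nat \<Rightarrow> (nat \<Rightarrow> real) \<Rightarrow> real" where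
  "joint N \<mu> \<sigma> dsq hsq wsq x y m \<theta> =
     1 / (2 * pi * (hsq * real m + wsq)) ^ CARD('m) *
     exp (- (norm y)\<^sup>2 / (2 * (hsq * real m + wsq))) *
     PB N m \<theta> * prior N \<mu> \<sigma> dsq x \<theta>"

definition qdist :: "(nat \<Rightarrow> real \<Rightarrow> real) \<Rightarrow> nat \<Rightarrow> real measure" where
  "qdist qth n = density lborel (\<lambda>z. ennreal (qth n z) * indicator {0<..<1} z)"

definition Qprod :: "(nat \<Rightarrow> real \<Rightarrow> real) \<Rightarrow> nat set \<Rightarrow> (nat \<Rightarrow> real) measure" where
  "Qprod qth I = PiM I (qdist qth)"

definition qstarT :: "nat \<Rightarrow> (nat \<Rightarrow> real) \<Rightarrow> (nat \<Rightarrow> real) \<Rightarrow> real \<Rightarrow> real \<Rightarrow> real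
    \<Rightarrow> (nat \<Rightarrow> real) \<Rightarrow> complex ^ 'm \<Rightarrow> (nat \<Rightarrow> real \<Rightarrow> real) \<Rightarrow> nat \<Rightarrow> real" where
  "qstarT N \<mu> \<sigma> dsq hsq wsq x y qth m =
     exp (\<integral>\<theta>. ln (joint N \<mu> \<sigma> dsq hsq wsq x y m \<theta>) \<partial>Qprod qth {1..N}) /
     (\<Sum>k = 0..N. exp (\<integral>\<theta>. ln (joint N \<mu> \<sigma> dsq hsq wsq x y k \<theta>) \<partial>Qprod qth {1..N}))"

definition Hth :: "nat \<Rightarrow> (nat \<Rightarrow> real) \<Rightarrow> (nat \<Rightarrow> real) \<Rightarrow> real \<Rightarrow> real \<Rightarrow> real
    \<Rightarrow> (nat \<Rightarrow> real) \<Rightarrow> complex ^ 'm \<Rightarrow> (nat \<Rightarrow> real) \<Rightarrow> (nat \<Rightarrow> real \<Rightarrow> real)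
    \<Rightarrow> nat \<Rightarrow> real \<Rightarrow> real" where
  "Hth N \<mu> \<sigma> dsq hsq wsq x y qT qth n z =
     (\<Sum>m = 0..N. qT m *
        (\<integral>\<theta>. ln (joint N \<mu> \<sigma> dsq hsq wsq x y m (\<theta>(n := z))) \<partial>Qprod qth ({1..N} - {n})))"

definition qstarTheta :: "nat \<Rightarrow> (nat \<Rightarrow> real) \<Rightarrow> (nat \<Rightarrow> real) \<Rightarrow> real \<Rightarrow> real \<Rightarrow> real
    \<Rightarrow> (nat \<Rightarrow> real) \<Rightarrow> complex ^ 'm \<Rightarrow> (nat \<Rightarrow> real) \<Rightarrow> (nat \<Rightarrow> real \<Rightarrow> real)
    \<Rightarrow> nat \<Rightarrow> real \<Rightarrow> real" where
  "qstarTheta N \<mu> \<sigma> dsq hsq wsq x y qT qth n z =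
     exp (Hth N \<mu> \<sigma> dsq hsq wsq x y qT qth n z) /
     (LINT w:{0<..<1}|lborel. exp (Hth N \<mu> \<sigma> dsq hsq wsq x y qT qth n w))"

definition F1 :: "nat \<Rightarrow> (nat \<Rightarrow> real \<Rightarrow> real) \<Rightarrow> nat \<Rightarrow> real" where
  "F1 N qth m = exp (\<integral>\<theta>. ln (Re (PBsum N m \<theta>)) \<partial>Qprod qth {1..N})"

definition F2 :: "nat \<Rightarrow> (nat \<Rightarrow> real) \<Rightarrow> (nat \<Rightarrow> real \<Rightarrow> real) \<Rightarrow> nat \<Rightarrow> real \<Rightarrow> real" where
  "F2 N qT qth n z = exp (\<Sum>m = 0..N. qT m *
        (\<integral>\<theta>. ln (Re (PBsum N m (\<theta>(n := z)))) \<partial>Qprod qth ({1..N} - {n})))"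

definition ga :: "nat \<Rightarrow> real \<Rightarrow> real \<Rightarrow> complex ^ 'm \<Rightarrow> (nat \<Rightarrow> real \<Rightarrow> real) \<Rightarrow> nat \<Rightarrow> real" where
  "ga N hsq wsq y qth m =
     F1 N qth m / (wsq + real m * hsq) ^ CARD('m) *
     exp (- (norm y)\<^sup>2 / (2 * (wsq + real m * hsq)))"

definition gb :: "nat \<Rightarrow> (nat \<Rightarrow> real) \<Rightarrow> (nat \<Rightarrow> real) \<Rightarrow> real \<Rightarrow> (nat \<Rightarrow> real)
    \<Rightarrow> (nat \<Rightarrow> real) \<Rightarrow> (nat \<Rightarrow> real \<Rightarrow> real) \<Rightarrow> nat \<Rightarrow> real \<Rightarrow> real" where
  "gb N \<mu> \<sigma> dsq x qT qth n z =
     F2 N qT qth n z / (z * (1 - z)) *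
     exp (- (1 / (2 * dsq)) * (- \<sigma> n * ln (1 / z - 1) + \<mu> n - x n)\<^sup>2)"

end

theory Submission
  imports Defs "HOL-Computational_Algebra.Polynomial"
begin

lemma coeff_lin_mult: "coeff ([:a, b:] * p) j = a * coeff p j + (if j = 0 then 0 else b * coeff p (j - 1))"
  by (cases j) (auto simp: coeff_pCons)

lemma prod_coeffs:
  fixes u v :: "nat \<Rightarrow> real"
  assumes "finite K" "\<forall>k\<in>K. u k > 0 \<and> v k > 0"
  shows "(\<forall>j. Im (coeff (\<Prod>k\<in>K. [:complex_of_real (u k), complex_of_real (v k):]) j) = 0
            \<and> Re (coeff (\<Prod>k\<in>K. [:complex_of_real (u k), complex_of_real (v k):]) j) \<ge> 0)
       \<and> (\<forall>j\<le>card K. Re (coeff (\<Prod>k\<in>K. [:complex_of_real (u k), complex_of_real (v k):]) j) > 0)"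
  using assms
proof (induction K rule: finite_induct)
  case empty
  then show ?case by (auto simp: coeff_pCons split: nat.splits)
next
  case (insert k K)
  define p where "p = (\<Prod>k\<in>K. [:complex_of_real (u k), complex_of_real (v k):])"
  have IH: "\<forall>j. Im (coeff p j) = 0 \<and> Re (coeff p j) \<ge> 0" "\<forall>j\<le>card K. Re (coeff p j) > 0"
    using insert unfolding p_def by auto
  have uv: "u k > 0" "v k > 0" using insert by auto
  have eq: "(\<Prod>k\<in>insert k K. [:complex_of_real (u k), complex_of_real (v k):]) = [:complex_of_real (u k), complex_of_real (v k):] * p"
    using insert unfolding p_def by simp
  show ?case unfolding eq coeff_lin_mult
  proof (intro conjI allI impI)
    fix j
    show "Im (complex_of_real (u k) * coeff p j + (if j = 0 then 0 else complex_of_real (v k) * coeff p (j - 1))) = 0"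
      using IH by auto
    show "0 \<le> Re (complex_of_real (u k) * coeff p j + (if j = 0 then 0 else complex_of_real (v k) * coeff p (j - 1)))"
      using IH uv by auto
  next
    fix j assume j: "j \<le> card (insert k K)"
    have cK: "card (insert k K) = Suc (card K)" using insert by simp
    show "0 < Re (complex_of_real (u k) * coeff p j + (if j = 0 then 0 else complex_of_real (v k) * coeff p (j - 1)))"
    proof (cases "j \<le> card K")
      case True
      then have "u k * Re (coeff p j) > 0" using IH uv by auto
      moreover have "Re (if j = 0 then 0 else complex_of_real (v k) * coeff p (j - 1)) \<ge> 0"
        using IH uv by auto
      ultimately show ?thesis by simp
    next
      case False
      then have "j = Suc (card K)" using j cK by simp
      then have "v k * Re (coeff p (j-1)) > 0" using IH uv by auto
      moreover have "u k * Re (coeff p j) \<ge> 0" using IH uv by auto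
      ultimately show ?thesis using \<open>j = Suc (card K)\<close> by simp
    qed
  qed
qed

lemma root_sum:
  fixes N j m :: nat
  assumes "j \<le> N" "m \<le> N"
  shows "(\<Sum>l = 0..N. inverse (c_root N) ^ (l * m) * (c_root N ^ l) ^ j) = (if j = m then of_nat (N+1) else 0)"
proof -
  define t where "t = 2 * pi * (real j - real m) / real (N + 1)"
  define w where "w = cis t"
  have trm: "inverse (c_root N) ^ (l * m) * (c_root N ^ l) ^ j = w ^ l" for l
  proof -
    have "inverse (c_root N) ^ (l * m) * (c_root N ^ l) ^ j
        = cis (real (l*m) * (- (2 * pi / real (N + 1)))) * cis (real (l * j) * (2 * pi / real (N + 1)))"
    proof -
      have a: "inverse (c_root N) ^ (l * m) = cis (real (l*m) * (- (2 * pi / real (N + 1))))"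
        unfolding c_root_def cis_inverse by (rule Complex.DeMoivre)
      have b: "(c_root N ^ l) ^ j = cis (real (l * j) * (2 * pi / real (N + 1)))"
        unfolding c_root_def by (simp only: Complex.DeMoivre) (simp add: algebra_simps)
      show ?thesis by (simp only: a b)
    qed
    also have "\<dots> = cis (real (l*m) * (- (2 * pi / real (N + 1))) + real (l * j) * (2 * pi / real (N + 1)))"
      by (simp add: cis_mult)
    also have "\<dots> = cis (real l * t)"
      by (rule arg_cong[where f=cis]) (simp add: t_def diff_divide_distrib algebra_simps)
    also have "\<dots> = w ^ l" by (simp add: w_def Complex.DeMoivre)
    finally show ?thesis .
  qed
  have "(\<Sum>l = 0..N. inverse (c_root N) ^ (l * m) * (c_root N ^ l) ^ j) = (\<Sum>l<N+1. w ^ l)"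
    by (simp add: trm atLeast0AtMost lessThan_Suc_atMost)
  also have "\<dots> = (if j = m then of_nat (N+1) else 0)"
  proof (cases "j = m")
    case True
    then have "w = 1" by (simp add: w_def t_def)
    then show ?thesis using True by simp
  next
    case False
    have wN: "w ^ (N+1) = 1"
    proof -
      have "w ^ (N+1) = cis (real (N+1) * t)"
        by (simp only: w_def Complex.DeMoivre)
      also have "\<dots> = cis (2 * pi * real_of_int (int j - int m))"
        by (rule arg_cong[where f=cis]) (simp add: t_def)
      also have "\<dots> = 1" by (rule cis_multiple_2pi) simp
      finally show ?thesis .
    qed
    have w1: "w \<noteq> 1"
    proof
      assume "w = 1"
      then have "exp (\<i> * complex_of_real t) = 1" by (simp add: w_def cis_conv_exp)
      then obtain n :: int where n: "t = of_int (2 * n) * pi" by (auto simp: exp_eq_1)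
      then have "2 * pi * (real j - real m) = 2 * pi * real_of_int n * real (N + 1)"
        by (simp add: t_def field_simps)
      then have "real j - real m = real_of_int n * real (N + 1)" by simp
      then have "real_of_int (int j - int m) = real_of_int (n * int (N + 1))" by simp
      then have e: "int j - int m = n * int (N + 1)" by (simp only: of_int_eq_iff)
      show False
      proof (cases "n = 0")
        case True then show False using e False by simp
      next
        case nz: False
        have "\<bar>n * int (N+1)\<bar> \<ge> int (N+1)" using nz by (simp add: abs_mult)
        moreover have "\<bar>int j - int m\<bar> \<le> int N" using assms by simp
        ultimately show False using e by simp
      qed
    qed
    have "(\<Sum>l<N+1. w ^ l) = 0" using geometric_sum[OF w1, of "N+1"] wN by simp
    then show ?thesis using False by simp
  qed
  finally show ?thesis .
qed

lemma PBsum_pos: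
  assumes th: "\<forall>k\<in>{1..N}. 0 < \<theta> k \<and> \<theta> k < 1" and m: "m \<le> N"
  shows "Re (PBsum N m \<theta>) > 0"
proof -
  define p where "p = (\<Prod>k\<in>{1..N}. [:complex_of_real (1 - \<theta> k), complex_of_real (\<theta> k):])"
  have cf: "(\<forall>j. Im (coeff p j) = 0 \<and> Re (coeff p j) \<ge> 0) \<and> (\<forall>j\<le>card {1..N}. Re (coeff p j) > 0)"
    unfolding p_def by (rule prod_coeffs) (use th in auto)
  have deg: "degree p \<le> N"
  proof -
    have "degree p \<le> (\<Sum>k\<in>{1..N}. (1::nat))"
      unfolding p_def by (rule order_trans[OF degree_prod_sum_le], simp, rule sum_mono, simp)
    then show ?thesis by simp
  qed
  have polyeq: "poly p w = (\<Sum>j\<le>N. coeff p j * w ^ j)" for w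
  proof -
    have "poly p w = (\<Sum>j\<le>degree p. coeff p j * w ^ j)" by (rule poly_altdef)
    also have "\<dots> = (\<Sum>j\<le>N. coeff p j * w ^ j)"
      by (rule sum.mono_neutral_left) (use deg in \<open>auto simp: coeff_eq_0\<close>)
    finally show ?thesis .
  qed
  have prodeq: "(\<Prod>k = 1..N. 1 + (c_root N ^ l - 1) * complex_of_real (\<theta> k)) = poly p (c_root N ^ l)" for l
    unfolding p_def poly_prod by (rule prod.cong) (auto simp: algebra_simps)
  have "PBsum N m \<theta> = (\<Sum>l = 0..N. inverse (c_root N) ^ (l * m) * (\<Sum>j\<le>N. coeff p j * (c_root N ^ l) ^ j))"
    unfolding PBsum_def prodeq polyeq ..
  also have "\<dots> = (\<Sum>j\<le>N. coeff p j * (\<Sum>l = 0..N. inverse (c_root N) ^ (l * m) * (c_root N ^ l) ^ j))"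
    by (simp add: sum_distrib_left sum_distrib_right algebra_simps sum.swap[of _ "{0..N}"])
  also have "\<dots> = (\<Sum>j\<le>N. coeff p j * (if j = m then of_nat (N+1) else 0))"
    by (rule sum.cong) (simp_all add: root_sum m)
  also have "\<dots> = coeff p m * of_nat (N+1)"
    using m by (simp add: if_distrib sum.delta cong: if_cong)
  finally have "Re (PBsum N m \<theta>) = Re (coeff p m) * real (N+1)" by simp
  moreover have "Re (coeff p m) > 0" using cf m by simp
  ultimately show ?thesis by simp
qed


lemma qdist_prob:
  assumes meas: "qth n \<in> borel_measurable lborel"
    and int: "(\<integral>\<^sup>+ z\<in>{0<..<1}. ennreal (qth n z) \<partial>lborel) = 1"
  shows "prob_space (qdist qth n)"
proof
  have m: "(\<lambda>z. ennreal (qth n z) * indicator {0<..<1::real} z) \<in> borel_measurable lborel"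
    using meas by measurable
  show "emeasure (qdist qth n) (space (qdist qth n)) = 1"
    unfolding qdist_def using int by (simp add: emeasure_density[OF m])
qed

lemma qdist_AE:
  assumes meas: "qth n \<in> borel_measurable lborel"
  shows "AE z in qdist qth n. 0 < z \<and> z < 1"
proof -
  have m: "(\<lambda>z. ennreal (qth n z) * indicator {0<..<1::real} z) \<in> borel_measurable lborel"
    using meas by measurable
  show ?thesis unfolding qdist_def AE_density[OF m]
    by (rule AE_I2) (auto simp: indicator_def)
qed

lemma Qprod_facts:
  assumes I: "I \<subseteq> {1..N}"
    and qth_meas: "\<forall>n\<in>{1..N}. qth n \<in> borel_measurable lborel"
    and qth_int: "\<forall>n\<in>{1..N}. (\<integral>\<^sup>+ z\<in>{0<..<1}. ennreal (qth n z) \<partial>lborel) = 1"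
  shows "prob_space (Qprod qth I)" and "AE \<theta> in Qprod qth I. \<forall>k\<in>I. 0 < \<theta> k \<and> \<theta> k < 1"
proof -
  have P: "\<And>i. i \<in> I \<Longrightarrow> prob_space (qdist qth i)"
    using I qth_meas qth_int by (intro qdist_prob) auto
  show "prob_space (Qprod qth I)" unfolding Qprod_def by (rule prob_space_PiM[OF P])
  have fin: "finite I" using I finite_subset by blast
  show "AE \<theta> in Qprod qth I. \<forall>k\<in>I. 0 < \<theta> k \<and> \<theta> k < 1"
    unfolding Qprod_def
  proof (rule AE_finite_allI[OF fin])
    fix k assume k: "k \<in> I"
    show "AE \<theta> in PiM I (qdist qth). 0 < \<theta> k \<and> \<theta> k < 1"
      by (rule AE_PiM_component[OF P k]) (use qdist_AE k I qth_meas in auto)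
  qed
qed

lemma ln_joint:
  fixes y :: "complex ^ 'b"
  assumes th: "\<forall>k\<in>{1..N}. 0 < \<theta> k \<and> \<theta> k < 1" and sg: "\<forall>k\<in>{1..N}. \<sigma> k > 0"
    and dsq: "dsq > 0" and hsq: "hsq > 0" and wsq: "wsq > 0" and m: "m \<le> N"
  shows "ln (joint N \<mu> \<sigma> dsq hsq wsq x y m \<theta>) =
     ln (1 / (2 * pi * (hsq * real m + wsq)) ^ CARD('b) * exp (- (norm y)\<^sup>2 / (2 * (hsq * real m + wsq))) / real (N + 1))
     + ln (Re (PBsum N m \<theta>))
     + (\<Sum>k = 1..N. ln (\<sigma> k / (\<theta> k - (\<theta> k)\<^sup>2)) - (- \<sigma> k * ln (1 / \<theta> k - 1) + \<mu> k - x k)\<^sup>2 / (2 * dsq))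
     + ln (1 / ((2 * pi) powr (real N / 2) * sqrt dsq ^ N))"
proof -
  define a where "a = 1 / (2 * pi * (hsq * real m + wsq)) ^ CARD('b) * exp (- (norm y)\<^sup>2 / (2 * (hsq * real m + wsq))) / real (N + 1)"
  define Pr where "Pr = Re (PBsum N m \<theta>)"
  define Pi where "Pi = (\<Prod>n = 1..N. \<sigma> n / (\<theta> n - (\<theta> n)\<^sup>2))"
  define cst where "cst = 1 / ((2 * pi) powr (real N / 2) * sqrt dsq ^ N)"
  define E where "E = - (\<Sum>n = 1..N. (- \<sigma> n * ln (1 / \<theta> n - 1) + \<mu> n - x n)\<^sup>2) / (2 * dsq)"
  have X: "hsq * real m + wsq > 0" using hsq wsq by (simp add: add_nonneg_pos)
  have apos: "a > 0" unfolding a_def using X by simp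
  have Prpos: "Pr > 0" unfolding Pr_def using PBsum_pos[OF th m] .
  have fpos: "\<sigma> k / (\<theta> k - (\<theta> k)\<^sup>2) > 0" if "k \<in> {1..N}" for k
  proof -
    have "\<theta> k - (\<theta> k)\<^sup>2 = \<theta> k * (1 - \<theta> k)" by (simp add: power2_eq_square algebra_simps)
    moreover have "\<theta> k * (1 - \<theta> k) > 0" using th that by simp
    ultimately show ?thesis using sg that by simp
  qed
  have Pipos: "Pi > 0" unfolding Pi_def using fpos by (intro prod_pos) auto
  have cstpos: "cst > 0" unfolding cst_def using dsq by simp
  have j: "joint N \<mu> \<sigma> dsq hsq wsq x y m \<theta> = a * Pr * (Pi * cst * exp E)"
    unfolding joint_def PB_def prior_def a_def Pr_def Pi_def cst_def E_def by simp
  have "ln (joint N \<mu> \<sigma> dsq hsq wsq x y m \<theta>) = ln a + ln Pr + (ln Pi + ln cst + E)"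
    unfolding j using apos Prpos Pipos cstpos by (simp add: ln_mult_pos)
  also have "ln Pi = (\<Sum>k = 1..N. ln (\<sigma> k / (\<theta> k - (\<theta> k)\<^sup>2)))"
    unfolding Pi_def by (rule ln_prod) (use fpos in \<open>force+\<close>)
  also have "E = - (\<Sum>k = 1..N. (- \<sigma> k * ln (1 / \<theta> k - 1) + \<mu> k - x k)\<^sup>2 / (2 * dsq))"
    unfolding E_def by (simp add: sum_divide_distrib)
  finally show ?thesis unfolding a_def Pr_def cst_def
    by (simp add: sum_subtractf)
qed

theorem mainTheorem6:
  fixes N :: nat and y :: "complex ^ 'm" and x \<mu> \<sigma> :: "nat \<Rightarrow> real"
    and dsq hsq wsq :: real
    and qT :: "nat \<Rightarrow> real" and qth :: "nat \<Rightarrow> real \<Rightarrow> real"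
  assumes N: "N \<ge> 1"
    and \<sigma>pos: "\<forall>n\<in>{1..N}. \<sigma> n > 0"
    and dsq: "dsq > 0" and hsq: "hsq > 0" and wsq: "wsq > 0"
    and qT_nonneg: "\<forall>m\<in>{0..N}. qT m \<ge> 0"
    and qT_sum: "(\<Sum>m = 0..N. qT m) = 1"
    and qth_meas: "\<forall>n\<in>{1..N}. qth n \<in> borel_measurable lborel"
    and qth_nonneg: "\<forall>n\<in>{1..N}. \<forall>z. qth n z \<ge> 0"
    and qth_int: "\<forall>n\<in>{1..N}. (\<integral>\<^sup>+ z\<in>{0<..<1}. ennreal (qth n z) \<partial>lborel) = 1"
    and fin1: "\<forall>m\<in>{0..N}. integrable (Qprod qth {1..N})
                 (\<lambda>\<theta>. ln (joint N \<mu> \<sigma> dsq hsq wsq x y m \<theta>))"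
    and fin2: "\<forall>m\<in>{0..N}. integrable (Qprod qth {1..N})
                 (\<lambda>\<theta>. ln (Re (PBsum N m \<theta>)))"
    and fin3: "\<forall>n\<in>{1..N}. \<forall>z\<in>{0<..<1}. \<forall>m\<in>{0..N}.
                 integrable (Qprod qth ({1..N} - {n}))
                   (\<lambda>\<theta>. ln (joint N \<mu> \<sigma> dsq hsq wsq x y m (\<theta>(n := z))))"
    and fin4: "\<forall>n\<in>{1..N}. \<forall>z\<in>{0<..<1}. \<forall>m\<in>{0..N}.
                 integrable (Qprod qth ({1..N} - {n}))
                   (\<lambda>\<theta>. ln (Re (PBsum N m (\<theta>(n := z)))))"
  shows "(\<forall>m\<in>{0..N}. qstarT N \<mu> \<sigma> dsq hsq wsq x y qth m
             = ga N hsq wsq y qth m / (\<Sum>k = 0..N. ga N hsq wsq y qth k))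
       \<and> (\<forall>n\<in>{1..N}. \<forall>z\<in>{0<..<1}. qstarTheta N \<mu> \<sigma> dsq hsq wsq x y qT qth n z
             = gb N \<mu> \<sigma> dsq x qT qth n z / (LINT w:{0<..<1}|lborel. gb N \<mu> \<sigma> dsq x qT qth n w))"
  proof -
  define J where "J = joint N \<mu> \<sigma> dsq hsq wsq x y"
  define A where "A m = ln (1 / (2 * pi * (hsq * real m + wsq)) ^ CARD('m) * exp (- (norm y)\<^sup>2 / (2 * (hsq * real m + wsq))) / real (N + 1))" for m
  define Rk where "Rk k t = ln (\<sigma> k / (t - t\<^sup>2)) - (- \<sigma> k * ln (1 / t - 1) + \<mu> k - x k)\<^sup>2 / (2 * dsq)" for k t
  define C0 where "C0 = ln (1 / ((2 * pi) powr (real N / 2) * sqrt dsq ^ N))"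
  define Pm where "Pm m \<theta> = ln (Re (PBsum N m \<theta>))" for m \<theta>
  have lnJ: "ln (J m \<theta>) = A m + Pm m \<theta> + (\<Sum>k = 1..N. Rk k (\<theta> k)) + C0"
    if "\<forall>k\<in>{1..N}. 0 < \<theta> k \<and> \<theta> k < 1" "m \<le> N" for m \<theta>
    unfolding J_def A_def Rk_def C0_def Pm_def
    by (rule ln_joint) (use that \<sigma>pos dsq hsq wsq in auto)
  have Apos: "exp (A m) = 1 / (2 * pi * (hsq * real m + wsq)) ^ CARD('m) * exp (- (norm y)\<^sup>2 / (2 * (hsq * real m + wsq))) / real (N + 1)" for m
  proof -
    have "hsq * real m + wsq > 0" using hsq wsq by (simp add: add_nonneg_pos)
    then show ?thesis unfolding A_def by (subst exp_ln) auto
  qed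
  define Q where "Q = Qprod qth {1..N}"
  have Qp: "prob_space Q" and QAE: "AE \<theta> in Q. \<forall>k\<in>{1..N}. 0 < \<theta> k \<and> \<theta> k < 1"
    unfolding Q_def using Qprod_facts[OF subset_refl qth_meas qth_int] by auto
  interpret Q: prob_space Q by (rule Qp)
  define D where "D \<theta> = ln (J 0 \<theta>) - A 0 - Pm 0 \<theta>" for \<theta>
  have i1: "integrable Q (\<lambda>\<theta>. ln (J 0 \<theta>))" unfolding Q_def J_def using fin1 by auto
  have i2: "integrable Q (Pm 0)" unfolding Q_def Pm_def using fin2 by auto
  have Dint: "integrable Q D"
    unfolding D_def by (intro Bochner_Integration.integrable_diff i1 i2 Q.integrable_const)
  have Pint: "integrable Q (Pm m)" if "m \<le> N" for m
    unfolding Q_def Pm_def using fin2 that by auto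
  have intL: "(\<integral>\<theta>. ln (J m \<theta>) \<partial>Q) = A m + ((\<integral>\<theta>. Pm m \<theta> \<partial>Q) + (\<integral>\<theta>. D \<theta> \<partial>Q))"
    if m: "m \<le> N" for m
  proof -
    have "(\<integral>\<theta>. ln (J m \<theta>) \<partial>Q) = (\<integral>\<theta>. A m + (Pm m \<theta> + D \<theta>) \<partial>Q)"
    proof (rule integral_cong_AE)
      show "(\<lambda>\<theta>. ln (J m \<theta>)) \<in> borel_measurable Q"
        using fin1 m unfolding Q_def J_def by (auto intro: borel_measurable_integrable)
      show "(\<lambda>\<theta>. A m + (Pm m \<theta> + D \<theta>)) \<in> borel_measurable Q"
        using Pint[OF m] Dint by (intro borel_measurable_integrable) auto
      show "AE \<theta> in Q. ln (J m \<theta>) = A m + (Pm m \<theta> + D \<theta>)"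
        using QAE by eventually_elim (simp add: lnJ m D_def)
    qed
    also have "\<dots> = A m + ((\<integral>\<theta>. Pm m \<theta> \<partial>Q) + (\<integral>\<theta>. D \<theta> \<partial>Q))"
      using Pint[OF m] Dint Q.prob_space by (simp add: integral_add)
    finally show ?thesis .
  qed
  define K where "K = exp (\<integral>\<theta>. D \<theta> \<partial>Q) / ((2 * pi) ^ CARD('m) * real (N + 1))"
  have Kpos: "K > 0" unfolding K_def by simp
  have expL: "exp (\<integral>\<theta>. ln (J m \<theta>) \<partial>Q) = K * ga N hsq wsq y qth m" if m: "m \<le> N" for m
  proof -
    have F1: "F1 N qth m = exp (\<integral>\<theta>. Pm m \<theta> \<partial>Q)" unfolding F1_def Q_def Pm_def ..
    have e: "wsq + real m * hsq = hsq * real m + wsq" by simp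
    have pw: "(2 * pi * (hsq * real m + wsq)) ^ CARD('m) = (2 * pi) ^ CARD('m) * (hsq * real m + wsq) ^ CARD('m)"
      by (simp add: power_mult_distrib)
    show ?thesis
      unfolding intL[OF m] exp_add Apos ga_def F1 K_def e pw
      by (simp add: field_simps)
  qed
  have part1: "\<forall>m\<in>{0..N}. qstarT N \<mu> \<sigma> dsq hsq wsq x y qth m
             = ga N hsq wsq y qth m / (\<Sum>k = 0..N. ga N hsq wsq y qth k)"
  proof
    fix m assume "m \<in> {0..N}"
    then have m: "m \<le> N" by simp
    have "qstarT N \<mu> \<sigma> dsq hsq wsq x y qth m = K * ga N hsq wsq y qth m / (\<Sum>k = 0..N. K * ga N hsq wsq y qth k)"
      unfolding qstarT_def J_def[symmetric] Q_def[symmetric] expL[OF m]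
      by (rule arg_cong[where f="\<lambda>t. _ / t"], rule sum.cong) (simp_all add: expL)
    also have "\<dots> = ga N hsq wsq y qth m / (\<Sum>k = 0..N. ga N hsq wsq y qth k)"
      using Kpos by (simp add: sum_distrib_left[symmetric])
    finally show "qstarT N \<mu> \<sigma> dsq hsq wsq x y qth m = ga N hsq wsq y qth m / (\<Sum>k = 0..N. ga N hsq wsq y qth k)" .
  qed
  have part2: "\<forall>n\<in>{1..N}. \<forall>z\<in>{0<..<1}. qstarTheta N \<mu> \<sigma> dsq hsq wsq x y qT qth n z
             = gb N \<mu> \<sigma> dsq x qT qth n z / (LINT w:{0<..<1}|lborel. gb N \<mu> \<sigma> dsq x qT qth n w)"
  proof (rule ballI)
    fix n assume n: "n \<in> {1..N}"
    define I' where "I' = {1..N} - {n}"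
    define Q' where "Q' = Qprod qth I'"
    have Qp': "prob_space Q'" and QAE': "AE \<theta> in Q'. \<forall>k\<in>I'. 0 < \<theta> k \<and> \<theta> k < 1"
      unfolding Q'_def using Qprod_facts[OF _ qth_meas qth_int, of I'] unfolding I'_def by auto
    interpret Q': prob_space Q' by (rule Qp')
    have upd: "\<forall>k\<in>{1..N}. 0 < (\<theta>(n := z)) k \<and> (\<theta>(n := z)) k < 1"
      if "\<forall>k\<in>I'. 0 < \<theta> k \<and> \<theta> k < 1" "z \<in> {0<..<1}" for \<theta> z
      using that unfolding I'_def by auto
    have ssplit: "(\<Sum>k = 1..N. Rk k ((\<theta>(n := z)) k)) = Rk n z + (\<Sum>k\<in>I'. Rk k (\<theta> k))" for \<theta> z
    proof -
      have "(\<Sum>k = 1..N. Rk k ((\<theta>(n := z)) k)) = Rk n ((\<theta>(n := z)) n) + (\<Sum>k\<in>I'. Rk k ((\<theta>(n := z)) k))"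
        unfolding I'_def using n by (subst sum.remove[of _ n]) auto
      also have "(\<Sum>k\<in>I'. Rk k ((\<theta>(n := z)) k)) = (\<Sum>k\<in>I'. Rk k (\<theta> k))"
        unfolding I'_def by (rule sum.cong) auto
      finally show ?thesis by simp
    qed
    have half: "(1/2::real) \<in> {0<..<1}" by simp
    define D2 where "D2 \<theta> = ln (J 0 (\<theta>(n := 1/2))) - A 0 - Pm 0 (\<theta>(n := 1/2)) - Rk n (1/2)" for \<theta>
    have j1: "integrable Q' (\<lambda>\<theta>. ln (J 0 (\<theta>(n := 1/2))))"
      unfolding Q'_def J_def I'_def using fin3[rule_format, OF n half, of 0] by simp
    have j2: "integrable Q' (\<lambda>\<theta>. Pm 0 (\<theta>(n := 1/2)))"
      unfolding Q'_def Pm_def I'_def using fin4[rule_format, OF n half, of 0] by simp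
    have D2int: "integrable Q' D2"
      unfolding D2_def by (intro Bochner_Integration.integrable_diff j1 j2 Q'.integrable_const)
    have P2int: "integrable Q' (\<lambda>\<theta>. Pm m (\<theta>(n := z)))" if "m \<le> N" "z \<in> {0<..<1}" for m z
      unfolding Q'_def Pm_def I'_def using fin4 n that by auto
    have intL2: "(\<integral>\<theta>. ln (J m (\<theta>(n := z))) \<partial>Q') = A m + ((\<integral>\<theta>. Pm m (\<theta>(n := z)) \<partial>Q') + (Rk n z + (\<integral>\<theta>. D2 \<theta> \<partial>Q')))"
      if m: "m \<le> N" and z: "z \<in> {0<..<1}" for m z
    proof -
      have "(\<integral>\<theta>. ln (J m (\<theta>(n := z))) \<partial>Q') = (\<integral>\<theta>. A m + (Pm m (\<theta>(n := z)) + (Rk n z + D2 \<theta>)) \<partial>Q')"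
      proof (rule integral_cong_AE)
        show "(\<lambda>\<theta>. ln (J m (\<theta>(n := z)))) \<in> borel_measurable Q'"
          using fin3 m n z unfolding Q'_def J_def I'_def by (auto intro: borel_measurable_integrable)
        show "(\<lambda>\<theta>. A m + (Pm m (\<theta>(n := z)) + (Rk n z + D2 \<theta>))) \<in> borel_measurable Q'"
          using P2int[OF m z] D2int by (intro borel_measurable_integrable) auto
        show "AE \<theta> in Q'. ln (J m (\<theta>(n := z))) = A m + (Pm m (\<theta>(n := z)) + (Rk n z + D2 \<theta>))"
          using QAE'
        proof eventually_elim
          case (elim \<theta>)
          show ?case
            using lnJ[OF upd[OF elim z] m] lnJ[OF upd[OF elim half], of 0]
            unfolding D2_def ssplit by linarith
        qed
      qed
      also have "\<dots> = A m + ((\<integral>\<theta>. Pm m (\<theta>(n := z)) \<partial>Q') + (Rk n z + (\<integral>\<theta>. D2 \<theta> \<partial>Q')))"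
        using P2int[OF m z] D2int Q'.prob_space by (simp add: integral_add)
      finally show ?thesis .
    qed
    define K2 where "K2 = exp (\<Sum>m = 0..N. qT m * A m) * exp (\<integral>\<theta>. D2 \<theta> \<partial>Q') * \<sigma> n"
    have K2pos: "K2 > 0" unfolding K2_def using \<sigma>pos n by simp
    have expH: "exp (Hth N \<mu> \<sigma> dsq hsq wsq x y qT qth n z) = K2 * gb N \<mu> \<sigma> dsq x qT qth n z"
      if z: "z \<in> {0<..<1}" for z
    proof -
      have "Hth N \<mu> \<sigma> dsq hsq wsq x y qT qth n z
          = (\<Sum>m = 0..N. qT m * (A m + ((\<integral>\<theta>. Pm m (\<theta>(n := z)) \<partial>Q') + (Rk n z + (\<integral>\<theta>. D2 \<theta> \<partial>Q')))))"
        unfolding Hth_def J_def[symmetric] Q'_def[symmetric] I'_def[symmetric]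
        by (rule sum.cong) (simp_all add: intL2[OF _ z])
      also have "\<dots> = (\<Sum>m = 0..N. qT m * A m) + (\<Sum>m = 0..N. qT m * (\<integral>\<theta>. Pm m (\<theta>(n := z)) \<partial>Q'))
                     + (\<Sum>m = 0..N. qT m) * (Rk n z + (\<integral>\<theta>. D2 \<theta> \<partial>Q'))"
        by (simp add: distrib_left sum.distrib sum_distrib_right)
      also have "\<dots> = (\<Sum>m = 0..N. qT m * A m) + (\<Sum>m = 0..N. qT m * (\<integral>\<theta>. Pm m (\<theta>(n := z)) \<partial>Q'))
                     + Rk n z + (\<integral>\<theta>. D2 \<theta> \<partial>Q')"
        using qT_sum by simp
      finally have H: "Hth N \<mu> \<sigma> dsq hsq wsq x y qT qth n z = \<dots>" .
      have F2: "F2 N qT qth n z = exp (\<Sum>m = 0..N. qT m * (\<integral>\<theta>. Pm m (\<theta>(n := z)) \<partial>Q'))"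
        unfolding F2_def Q'_def I'_def Pm_def ..
      have zz: "z - z\<^sup>2 = z * (1 - z)" by (simp add: power2_eq_square algebra_simps)
      have zpos: "z * (1 - z) > 0" using z by simp
      have eR: "exp (Rk n z) = \<sigma> n / (z * (1 - z)) * exp (- (1 / (2 * dsq)) * (- \<sigma> n * ln (1 / z - 1) + \<mu> n - x n)\<^sup>2)"
        unfolding Rk_def zz exp_diff using \<sigma>pos n zpos
        by (subst exp_ln) (auto simp: exp_minus field_simps)
      show ?thesis
        unfolding H exp_add eR gb_def F2 K2_def by (simp add: field_simps)
    qed
    show "\<forall>z\<in>{0<..<1}. qstarTheta N \<mu> \<sigma> dsq hsq wsq x y qT qth n z
             = gb N \<mu> \<sigma> dsq x qT qth n z / (LINT w:{0<..<1}|lborel. gb N \<mu> \<sigma> dsq x qT qth n w)"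
    proof
      fix z :: real assume z: "z \<in> {0<..<1}"
      have LI: "(LINT w:{0<..<1}|lborel. exp (Hth N \<mu> \<sigma> dsq hsq wsq x y qT qth n w))
          = (LINT w:{0<..<1}|lborel. K2 * gb N \<mu> \<sigma> dsq x qT qth n w)"
        by (rule set_lebesgue_integral_cong) (auto simp: expH)
      show "qstarTheta N \<mu> \<sigma> dsq hsq wsq x y qT qth n z
             = gb N \<mu> \<sigma> dsq x qT qth n z / (LINT w:{0<..<1}|lborel. gb N \<mu> \<sigma> dsq x qT qth n w)"
        unfolding qstarTheta_def LI expH[OF z] set_integral_mult_right
        using K2pos by simp
    qed
  qed
  show ?thesis using part1 part2 by blast
qed

end
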